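(* Let $A\in\mathbb{R}^{m\times n}$ and $b\in\mathbb{R}^m$ be such that $S_+=\{z\in\mathbb{R}^n_+ : Az=b\}$ is nonempty, and let $x_0\in\mathbb{R}^n_{++}$. Let $(x_k)$ be generated by entropic mirror descent with the Polyak-type stepsize $$\alpha_k=\min\left\{\frac{f(x_k)}{\|\nabla f(x_k)\|^2_{x_k}},\ \frac{1.79}{\|\nabla f(x_k)\|_\infty}\right\},\qquad x_{k+1}=x_k\circ\exp(-\alpha_k\nabla f(x_k)),$$ where $f(x)=\frac12\|Ax-b\|_2^2$ (if $\nabla f(x_k)=0$ for some $k$, the sequence is kept constant from then on). Then $(x_k)$ converges to some $x^*\in S_+$, and for all $k\ge0$ $$\min_{0\le i\le k} f(x_i)\le \frac{4R\,(R+\|x^*\|_1)\max_{j\le n}\|A_{:j}\|_2^2}{k+1},\qquad R=D_h(x^*,x_0).$$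
   Context: $\mathbb{R}^n_+$, $\mathbb{R}^n_{++}$ denote the nonnegative and strictly positive orthants; $\circ$ is componentwise multiplication and $\exp$, squares etc. act componentwise. $\nabla f(x)=A^\top(Ax-b)$. For $x\in\mathbb{R}^n_+$ and $v\in\mathbb{R}^n$, $\|v\|_x^2:=\sum_i x_iv_i^2$. $A_{:j}$ is the $j$-th column of $A$. The entropy is $h(x)=\sum_i x_i(\log x_i-1)$ on $\mathbb{R}^n_+$ (with $0\log0=0$) and $D_h(x,y)=\sum_i\big(x_i\log\frac{x_i}{y_i}-x_i+y_i\big)$ for $x\in\mathbb{R}^n_+$, $y\in\mathbb{R}^n_{++}$. *)

theory Defs
  imports "HOL-Analysis.Analysis"
begin

definition lsq :: "real^'n^'m \<Rightarrow> real^'m \<Rightarrow> real^'n \<Rightarrow> real" where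
  "lsq A b x = (1/2) * (norm (A *v x - b))\<^sup>2"

definition lsq_grad :: "real^'n^'m \<Rightarrow> real^'m \<Rightarrow> real^'n \<Rightarrow> real^'n" where
  "lsq_grad A b x = transpose A *v (A *v x - b)"

definition local_norm_sq :: "real^'n \<Rightarrow> real^'n \<Rightarrow> real" where
  "local_norm_sq x v = (\<Sum>i\<in>UNIV. x $ i * (v $ i)\<^sup>2)"

definition inf_norm :: "real^'n \<Rightarrow> real" where
  "inf_norm v = Max ((\<lambda>i. \<bar>v $ i\<bar>) ` UNIV)"

definition one_norm :: "real^'n \<Rightarrow> real" where
  "one_norm v = (\<Sum>i\<in>UNIV. \<bar>v $ i\<bar>)"

definition polyak_step :: "real^'n^'m \<Rightarrow> real^'m \<Rightarrow> real^'n \<Rightarrow> real" where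
  "polyak_step A b x = min (lsq A b x / local_norm_sq x (lsq_grad A b x))
                           ((179/100) / inf_norm (lsq_grad A b x))"

definition emd_step :: "real^'n^'m \<Rightarrow> real^'m \<Rightarrow> real^'n \<Rightarrow> real^'n" where
  "emd_step A b x = (if lsq_grad A b x = 0 then x
     else (\<chi> i. x $ i * exp (- polyak_step A b x * lsq_grad A b x $ i)))"

definition entropy_breg :: "real^'n \<Rightarrow> real^'n \<Rightarrow> real" where
  "entropy_breg x y = (\<Sum>i\<in>UNIV.
     (if x $ i = 0 then 0 else x $ i * ln (x $ i / y $ i)) - x $ i + y $ i)"

definition feas_nonneg :: "real^'n^'m \<Rightarrow> real^'m \<Rightarrow> (real^'n) set" where
  "feas_nonneg A b = {z. (\<forall>i. z $ i \<ge> 0) \<and> A *v z = b}"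

definition max_col_sq :: "real^'n^'m \<Rightarrow> real" where
  "max_col_sq A = Max ((\<lambda>j. \<Sum>i\<in>UNIV. (A $ i $ j)\<^sup>2) ` UNIV)"

end

theory Submission
  imports Defs
begin


lemma exp_bound_179:
  fixes t :: real assumes "\<bar>t\<bar> \<le> 179/100"
  shows "exp (- t) \<le> 1 - t + 11/10 * t\<^sup>2"
proof -
  obtain s where s: "\<bar>s\<bar> \<le> \<bar>-t\<bar>" and e: "exp (-t) = (\<Sum>m<6. ((-t) ^ m) / fact m) + (exp s / fact 6) * (-t) ^ 6"
    using Maclaurin_exp_le[of "-t" 6] by blast
  have "exp s \<le> exp (1 + 79/100)" using s assms by simp
  also have "exp (1 + 79/100::real) = exp 1 * exp (79/100)" by (simp flip: exp_add)
  also have "\<dots> \<le> 3 * (1 + 79/100 + (79/100)\<^sup>2)" using exp_le exp_bound[of "79/100::real"] by (intro mult_mono) auto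
  finally have es: "exp s \<le> 15/2" by (simp add: power2_eq_square)
  have fact6: "fact 6 = (720::real)" by (simp add: fact_numeral)
  have e2: "exp (-t) \<le> 1 - t + t\<^sup>2/2 - t^3/6 + t^4/24 - t^5/120 + 15/1440 * t^6"
  proof -
    have "(0::real) \<le> t^6" by (simp add: zero_le_even_power)
    then have h6: "exp s * t^6 \<le> t^6 * (15/2)" using mult_right_mono[OF es, of "t^6"] by (simp add: mult.commute)
    show ?thesis unfolding e fact6 using h6 by (simp add: lessThan_nat_numeral fact_numeral)
  qed
  let ?a = "\<bar>t\<bar>"
  have a0: "0 \<le> ?a" by simp
  have h: "t\<^sup>2/2 - t^3/6 + t^4/24 - t^5/120 + 15/1440 * t^6 \<le> t\<^sup>2 * (1/2 + ?a/6 + ?a ^ 2/24 + ?a ^ 3/120 + 15/1440*?a ^ 4)"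
  proof -
    have "-(t^3) \<le> t\<^sup>2 * ?a"
    proof -
      have "-(t^3) = t\<^sup>2 * (-t)" by (simp add: power2_eq_square power3_eq_cube)
      also have "\<dots> \<le> t\<^sup>2 * ?a" by (intro mult_left_mono) auto
      finally show ?thesis .
    qed
    moreover have "t^4 = t\<^sup>2 * ?a ^ 2" by (simp add: power_even_abs flip: power_add)
    moreover have "-(t^5) \<le> t\<^sup>2 * ?a ^ 3"
    proof -
      have "-(t^5) = t^4 * (-t)" by (simp add: eval_nat_numeral)
      also have "\<dots> \<le> t^4 * ?a" by (intro mult_left_mono) auto
      also have "\<dots> = t\<^sup>2 * ?a ^ 3" by (simp add: power_even_abs eval_nat_numeral)
      finally show ?thesis .
    qed
    moreover have "t^6 = t\<^sup>2 * ?a ^ 4" by (simp add: power_even_abs flip: power_add)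
    ultimately show ?thesis by (simp add: algebra_simps)
  qed
  have "1/2 + ?a/6 + ?a ^ 2/24 + ?a ^ 3/120 + 15/1440*?a ^ 4 \<le> 1/2 + (179/100)/6 + (179/100)^2/24 + (179/100)^3/120 + 15/1440*(179/100)^4"
    using assms by (intro add_mono divide_right_mono mult_left_mono power_mono) auto
  also have "\<dots> \<le> 11/10" by (simp add: eval_nat_numeral)
  finally have "t\<^sup>2 * (1/2 + ?a/6 + ?a ^ 2/24 + ?a ^ 3/120 + 15/1440*?a ^ 4) \<le> t\<^sup>2 * (11/10)"
    by (intro mult_left_mono) auto
  with e2 h show ?thesis by linarith
qed



lemma lsq_nonneg: "0 \<le> lsq A b x" by (simp add: lsq_def)

lemma lsq_inner: "lsq A b x = 1/2 * ((A *v x - b) \<bullet> (A *v x - b))"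
  by (simp add: lsq_def power2_norm_eq_inner)

lemma grad_inner:
  assumes "z \<in> feas_nonneg A b"
  shows "(\<Sum>i\<in>UNIV. lsq_grad A b x $ i * (z $ i - x $ i)) = - 2 * lsq A b x"
proof -
  have Az: "A *v z = b" using assms by (simp add: feas_nonneg_def)
  have "(\<Sum>i\<in>UNIV. lsq_grad A b x $ i * (z $ i - x $ i)) = lsq_grad A b x \<bullet> (z - x)"
    by (simp add: inner_vec_def)
  also have "\<dots> = (A *v x - b) \<bullet> (A *v (z - x))"
    by (simp add: lsq_grad_def dot_lmul_matrix)
  also have "\<dots> = - ((A *v x - b) \<bullet> (A *v x - b))"
    by (simp add: matrix_vector_mult_diff_distrib Az inner_diff_right inner_commute algebra_simps)
  finally show ?thesis by (simp add: lsq_inner)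
qed

lemma grad_zero_imp:
  assumes "z \<in> feas_nonneg A b" "lsq_grad A b x = 0"
  shows "lsq A b x = 0"
  using grad_inner[OF assms(1), of x] assms(2) by simp

lemma grad_comp_sq: "(lsq_grad A b x $ i)\<^sup>2 \<le> max_col_sq A * (2 * lsq A b x)"
proof -
  define c where "c = (\<chi> j. A $ j $ i)"
  define r where "r = A *v x - b"
  have g: "lsq_grad A b x $ i = c \<bullet> r"
    by (simp add: lsq_grad_def c_def r_def vector_matrix_mult_def inner_vec_def mult.commute)
  have cc: "c \<bullet> c \<le> max_col_sq A"
    unfolding max_col_sq_def c_def by (rule Max_ge) (auto simp: inner_vec_def power2_eq_square)
  have "(c \<bullet> r)\<^sup>2 \<le> (c \<bullet> c) * (r \<bullet> r)" by (rule Cauchy_Schwarz_ineq)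
  also have "\<dots> \<le> max_col_sq A * (r \<bullet> r)" by (intro mult_right_mono cc) simp
  finally show ?thesis by (simp add: g lsq_inner r_def)
qed

lemma max_col_sq_nonneg: "0 \<le> max_col_sq A"
proof -
  have "(\<Sum>i\<in>UNIV. (A $ i $ j)\<^sup>2) \<le> max_col_sq A" for j
    unfolding max_col_sq_def by (rule Max_ge) auto
  moreover have "0 \<le> (\<Sum>i\<in>UNIV. (A $ i $ j)\<^sup>2)" for j by (simp add: sum_nonneg)
  ultimately show ?thesis by (meson order_trans)
qed

lemma local_norm_bound:
  assumes "\<forall>i. 0 \<le> x $ i"
  shows "local_norm_sq x (lsq_grad A b x) \<le> one_norm x * (max_col_sq A * (2 * lsq A b x))"
proof -
  have "local_norm_sq x (lsq_grad A b x) \<le> (\<Sum>i\<in>UNIV. x $ i * (max_col_sq A * (2 * lsq A b x)))"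
    unfolding local_norm_sq_def using assms
    by (intro sum_mono mult_left_mono grad_comp_sq) auto
  also have "\<dots> = one_norm x * (max_col_sq A * (2 * lsq A b x))"
    using assms by (simp add: one_norm_def sum_distrib_right)
  finally show ?thesis .
qed

lemma comp_le_inf_norm: "\<bar>v $ i\<bar> \<le> inf_norm v"
  unfolding inf_norm_def by (rule Max_ge) auto

lemma inf_norm_attained: "\<exists>j. inf_norm v = \<bar>v $ j\<bar>"
proof -
  have "inf_norm v \<in> (\<lambda>i. \<bar>v $ i\<bar>) ` UNIV" unfolding inf_norm_def by (rule Max_in) auto
  then show ?thesis by auto
qed

lemma inf_norm_sq: "(inf_norm (lsq_grad A b x))\<^sup>2 \<le> max_col_sq A * (2 * lsq A b x)"
  using inf_norm_attained[of "lsq_grad A b x"] grad_comp_sq[of A b x] by (metis power2_abs)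



definition bterm :: "real \<Rightarrow> real \<Rightarrow> real" where
  "bterm z x = (if z = 0 then 0 else z * ln (z / x)) - z + x"

lemma breg_sum: "entropy_breg z x = (\<Sum>i\<in>UNIV. bterm (z $ i) (x $ i))"
  by (simp add: entropy_breg_def bterm_def)

lemma bterm_sqrt:
  assumes "0 \<le> z" "0 < x"
  shows "(sqrt x - sqrt z)\<^sup>2 \<le> bterm z x"
proof (cases "z = 0")
  case True then show ?thesis using assms by (simp add: bterm_def)
next
  case False
  then have z0: "0 < z" using assms by simp
  define sz where "sz = sqrt z"
  define sx where "sx = sqrt x"
  have sz: "0 < sz" "sz\<^sup>2 = z" using z0 by (auto simp: sz_def)
  have sx: "0 < sx" "sx\<^sup>2 = x" using assms by (auto simp: sx_def)
  define v where "v = sz / sx"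
  have v0: "0 < v" using sz sx by (simp add: v_def)
  have "z / x = v\<^sup>2" using sz sx by (simp add: v_def power_divide)
  then have lz: "ln (z / x) = 2 * ln v" using v0 by (simp add: ln_realpow)
  have "ln (1 / v) \<le> 1 / v - 1" using v0 by (intro ln_le_minus_one) simp
  then have lv: "1 - 1 / v \<le> ln v" using v0 by (simp add: ln_div)
  have "z * (2 - 2 / v) \<le> z * ln (z / x)" unfolding lz using lv z0 by (intro mult_left_mono) auto
  moreover have "z * (2 - 2 / v) = 2 * z - 2 * sz * sx"
    using sz sx by (simp add: v_def field_simps power2_eq_square)
  moreover have "(sqrt x - sqrt z)\<^sup>2 = x + z - 2 * sz * sx"
    using sz sx by (simp add: sz_def[symmetric] sx_def[symmetric] power2_diff algebra_simps)
  ultimately show ?thesis using False by (simp add: bterm_def)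
qed

lemma bterm_nonneg: "0 \<le> z \<Longrightarrow> 0 < x \<Longrightarrow> 0 \<le> bterm z x"
  using bterm_sqrt[of z x] by (meson order_trans zero_le_power2)

lemma ln_le_04: fixes t :: real assumes "0 < t" shows "ln t \<le> 2/5 * t"
proof -
  have "5/2 \<le> exp (1::real)" using exp_lower_Taylor_quadratic[of 1] by simp
  then have l1: "ln (5/2) \<le> (1::real)" by (metis ln_exp ln_le_cancel_iff exp_gt_zero zero_less_divide_iff zero_less_numeral)
  have "ln (5/2) + ln (2 * t / 5) = ln ((5/2) * (2 * t / 5))" using assms by (intro ln_mult_pos[symmetric]) auto
  then have "ln t = ln (5/2) + ln (2 * t / 5)" by simp
  also have "ln (2 * t / 5) \<le> 2 * t / 5 - 1" using assms by (intro ln_le_minus_one) simp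
  finally show ?thesis using l1 by simp
qed

lemma bterm_lin:
  assumes "0 \<le> z" "0 < x"
  shows "3/5 * x - z \<le> bterm z x"
proof (cases "z = 0")
  case True then show ?thesis using assms by (simp add: bterm_def)
next
  case False
  then have z0: "0 < z" using assms by simp
  have "ln (x / z) \<le> 2/5 * (x / z)" using z0 assms by (intro ln_le_04) simp
  then have "z * ln (x / z) \<le> z * (2/5 * (x / z))" using z0 by (intro mult_left_mono) auto
  also have "\<dots> = 2/5 * x" using z0 by simp
  finally have "z * ln (x / z) \<le> 2/5 * x" .
  moreover have "ln (z / x) = - ln (x / z)" using z0 assms by (simp add: ln_div)
  ultimately show ?thesis using False by (simp add: bterm_def)
qed

lemma breg_nonneg:
  assumes "\<forall>i. 0 \<le> z $ i" "\<forall>i. 0 < x $ i"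
  shows "0 \<le> entropy_breg z x"
  unfolding breg_sum using assms by (intro sum_nonneg bterm_nonneg) auto

lemma one_norm_bound:
  assumes "\<forall>i. 0 \<le> z $ i" "\<forall>i. 0 < x $ i"
  shows "3/5 * one_norm x - one_norm z \<le> entropy_breg z x"
proof -
  have "3/5 * one_norm x - one_norm z = (\<Sum>i\<in>UNIV. 3/5 * x $ i - z $ i)"
    using assms by (simp add: one_norm_def sum_subtractf sum_distrib_left less_imp_le)
  also have "\<dots> \<le> (\<Sum>i\<in>UNIV. bterm (z $ i) (x $ i))"
    using assms by (intro sum_mono bterm_lin) auto
  finally show ?thesis by (simp add: breg_sum)
qed

lemma comp_sqrt_bound:
  assumes "\<forall>i. 0 \<le> z $ i" "\<forall>i. 0 < x $ i"
  shows "(sqrt (x $ i) - sqrt (z $ i))\<^sup>2 \<le> entropy_breg z x"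
proof -
  have "(sqrt (x $ i) - sqrt (z $ i))\<^sup>2 \<le> bterm (z $ i) (x $ i)" using assms by (intro bterm_sqrt) auto
  also have "\<dots> \<le> (\<Sum>i\<in>UNIV. bterm (z $ i) (x $ i))"
    using assms by (intro member_le_sum bterm_nonneg) auto
  finally show ?thesis by (simp add: breg_sum)
qed



lemma emd_step_pos:
  assumes "\<forall>i. 0 < x $ i"
  shows "\<forall>i. 0 < emd_step A b x $ i"
  using assms by (simp add: emd_step_def)

lemma polyak_facts:
  assumes "\<forall>i. 0 < x $ i" "lsq_grad A b x \<noteq> 0"
  shows "0 < local_norm_sq x (lsq_grad A b x)" "0 < inf_norm (lsq_grad A b x)"
    "0 \<le> polyak_step A b x"
    "polyak_step A b x * local_norm_sq x (lsq_grad A b x) \<le> lsq A b x"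
    "polyak_step A b x * inf_norm (lsq_grad A b x) \<le> 179/100"
proof -
  let ?g = "lsq_grad A b x"
  obtain j where j: "?g $ j \<noteq> 0" using assms(2) by (metis vec_eq_iff zero_index)
  have "0 < x $ j * (?g $ j)\<^sup>2" using j assms(1) by simp
  also have "\<dots> \<le> local_norm_sq x ?g"
    unfolding local_norm_sq_def using assms(1)
    by (intro member_le_sum) (simp_all add: less_imp_le)
  finally show N: "0 < local_norm_sq x ?g" .
  have "0 < \<bar>?g $ j\<bar>" using j by simp
  also have "\<dots> \<le> inf_norm ?g" by (rule comp_le_inf_norm)
  finally show G: "0 < inf_norm ?g" .
  show "0 \<le> polyak_step A b x" using N G lsq_nonneg[of A b x]
    by (simp add: polyak_step_def)
  have "polyak_step A b x \<le> lsq A b x / local_norm_sq x ?g" by (simp add: polyak_step_def)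
  then show "polyak_step A b x * local_norm_sq x ?g \<le> lsq A b x" using N by (simp add: pos_le_divide_eq)
  have "polyak_step A b x \<le> (179/100) / inf_norm ?g" by (simp add: polyak_step_def)
  then show "polyak_step A b x * inf_norm ?g \<le> 179/100" using G by (simp add: pos_le_divide_eq)
qed

lemma step_decrease:
  assumes z: "z \<in> feas_nonneg A b" and x: "\<forall>i. 0 < x $ i" and g0: "lsq_grad A b x \<noteq> 0"
  shows "entropy_breg z (emd_step A b x) + 9/10 * (polyak_step A b x * lsq A b x) \<le> entropy_breg z x"
proof -
  let ?g = "lsq_grad A b x"
  define a where "a = polyak_step A b x"
  define N where "N = local_norm_sq x ?g"
  define f where "f = lsq A b x"
  note pf = polyak_facts[OF x g0, folded a_def N_def f_def]
  have z0: "\<forall>i. 0 \<le> z $ i" using z by (simp add: feas_nonneg_def)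
  have xp: "emd_step A b x $ i = x $ i * exp (- a * ?g $ i)" for i
    using g0 by (simp add: emd_step_def a_def)
  have tm: "bterm (z $ i) (emd_step A b x $ i) \<le> bterm (z $ i) (x $ i) + a * (?g $ i * (z $ i - x $ i))
      + 11/10 * a\<^sup>2 * (x $ i * (?g $ i)\<^sup>2)" for i
  proof -
    have ab: "\<bar>a * ?g $ i\<bar> \<le> 179/100"
    proof -
      have "\<bar>a * ?g $ i\<bar> = a * \<bar>?g $ i\<bar>" using pf(3) by (simp add: abs_mult)
      also have "\<dots> \<le> a * inf_norm ?g" using pf(3) comp_le_inf_norm by (intro mult_left_mono) auto
      finally show ?thesis using pf(5) by simp
    qed
    have e: "exp (- (a * ?g $ i)) \<le> 1 - a * ?g $ i + 11/10 * (a * ?g $ i)\<^sup>2" by (rule exp_bound_179[OF ab])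
    have xe: "x $ i * exp (- a * ?g $ i) \<le> x $ i * (1 - a * ?g $ i + 11/10 * (a * ?g $ i)\<^sup>2)"
      using e x by (intro mult_left_mono) (auto simp: less_imp_le)
    have lnp: "z $ i \<noteq> 0 \<Longrightarrow> ln (z $ i / (x $ i * exp (- a * ?g $ i))) = ln (z $ i / x $ i) + a * ?g $ i"
    proof -
      assume "z $ i \<noteq> 0"
      then have "0 < z $ i" using z0 by (metis order_le_less)
      then show ?thesis using x[rule_format, of i] by (simp add: ln_div ln_mult_pos)
    qed
    show ?thesis using xe lnp unfolding bterm_def xp
      by (cases "z $ i = 0") (auto simp: algebra_simps power2_eq_square)
  qed
  have "entropy_breg z (emd_step A b x) \<le> (\<Sum>i\<in>UNIV. bterm (z $ i) (x $ i) + a * (?g $ i * (z $ i - x $ i))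
      + 11/10 * a\<^sup>2 * (x $ i * (?g $ i)\<^sup>2))"
    unfolding breg_sum by (intro sum_mono tm)
  also have "\<dots> = entropy_breg z x + a * (- 2 * f) + 11/10 * a\<^sup>2 * N"
    by (simp add: sum.distrib breg_sum sum_distrib_left[symmetric] grad_inner[OF z] f_def N_def local_norm_sq_def sum_divide_distrib[symmetric])
  also have "\<dots> \<le> entropy_breg z x - 9/10 * (a * f)"
  proof -
    have "a\<^sup>2 * N \<le> a * f" using pf(3) pf(4) mult_left_mono[OF pf(4) pf(3)] by (simp add: power2_eq_square mult.assoc)
    then show ?thesis by simp
  qed
  finally show ?thesis by (simp add: a_def f_def)
qed



lemma rate_step:
  assumes z: "z \<in> feas_nonneg A b" and x: "\<forall>i. 0 < x $ i" and g0: "lsq_grad A b x \<noteq> 0"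
    and R: "entropy_breg z x \<le> R" and K: "1 \<le> K"
    and fB: "4 * R * (R + one_norm z) * max_col_sq A / K < lsq A b x"
  shows "R < 9/10 * K * (polyak_step A b x * lsq A b x)"
proof -
  let ?g = "lsq_grad A b x"
  define a where "a = polyak_step A b x"
  define N where "N = local_norm_sq x ?g"
  define G where "G = inf_norm ?g"
  define f where "f = lsq A b x"
  define L where "L = max_col_sq A"
  define c where "c = one_norm z"
  define s where "s = one_norm x"
  note pf = polyak_facts[OF x g0, folded a_def N_def f_def G_def]
  have z0: "\<forall>i. 0 \<le> z $ i" using z by (simp add: feas_nonneg_def)
  have R0: "0 \<le> R" using breg_nonneg[OF z0 x] R by simp
  have c0: "0 \<le> c" by (simp add: c_def one_norm_def sum_nonneg)
  have L0: "0 \<le> L" by (simp add: L_def max_col_sq_nonneg)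
  have K0: "0 < K" using K by simp
  have fK: "4 * R * (R + c) * L < f * K" using fB K0 by (simp add: f_def c_def L_def pos_divide_less_eq)
  have B0: "0 \<le> 4 * R * (R + c) * L" using R0 c0 L0 by simp
  have "0 < f * K" using fK B0 by linarith
  then have f0: "0 < f" using K0 by (simp add: zero_less_mult_iff)
  have sR: "3/5 * s \<le> R + c" using one_norm_bound[OF z0 x] R by (simp add: s_def c_def)
  have Nb: "N \<le> s * (L * (2 * f))" using local_norm_bound[of x A b] x by (simp add: N_def s_def L_def f_def less_imp_le)
  have a_cases: "a = f / N \<or> a = (179/100) / G" by (simp add: a_def polyak_step_def f_def N_def G_def min_def)
  show ?thesis
  proof (cases "a = f / N")
    case True
    have aN: "a * N = f" using True pf(1) by simp
    define M where "M = 10/3 * (R + c) * L * f"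
    have NM: "N \<le> M"
    proof -
      have "s * (L * (2 * f)) \<le> (5/3 * (R + c)) * (L * (2 * f))"
        using sR L0 f0 by (intro mult_right_mono) auto
      then show ?thesis using Nb by (simp add: M_def algebra_simps)
    qed
    have M0: "0 < M" using NM pf(1) by simp
    have "f * f = a * f * N" using aN by (simp add: algebra_simps)
    also have "\<dots> \<le> a * f * M" using NM pf(3) f0 by (intro mult_left_mono) auto
    finally have ff: "f * f \<le> a * f * M" .
    have "R * M < 9/10 * K * f * f"
    proof -
      have "R * M = 10/3 * (R * (R + c) * L) * f" by (simp add: M_def algebra_simps)
      also have "\<dots> \<le> 10/3 * (f * K / 4) * f" using fK f0 by (intro mult_right_mono) (auto simp: algebra_simps)
      also have "\<dots> < 9/10 * K * f * f" using f0 K0 by (simp add: algebra_simps)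
      finally show ?thesis .
    qed
    also have "\<dots> \<le> 9/10 * K * (a * f * M)" using ff K0 by (simp add: mult.assoc)
    finally have "R * M < (9/10 * K * (a * f)) * M" by (simp add: algebra_simps)
    then show ?thesis using M0 by (simp add: a_def f_def)
  next
    case False
    then have aG: "a * G = 179/100" using a_cases pf(2) by auto
    have G2: "G\<^sup>2 \<le> L * (2 * f)" using inf_norm_sq[of A b x] by (simp add: G_def L_def f_def)
    define u where "u = a * f"
    have "a = (179/100) / G" using False a_cases by auto
    then have "0 < a" using pf(2) by simp
    then have u0: "0 < u" using f0 by (simp add: u_def)
    have "(179/100)\<^sup>2 * f\<^sup>2 = (a * G)\<^sup>2 * f\<^sup>2" using aG by simp
    also have "\<dots> = u\<^sup>2 * G\<^sup>2" by (simp add: u_def power_mult_distrib)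
    also have "\<dots> \<le> u\<^sup>2 * (L * (2 * f))" using G2 by (intro mult_left_mono) auto
    finally have ff2: "(179/100)\<^sup>2 * f\<^sup>2 \<le> u\<^sup>2 * (L * (2 * f))" .
    have "((179/100)\<^sup>2 * f) * f \<le> (u\<^sup>2 * L * 2) * f"
      using ff2 by (simp only: power2_eq_square[of f] mult_ac)
    then have fu: "(179/100)\<^sup>2 * f \<le> u\<^sup>2 * L * 2" using f0 by simp
    have L1: "0 < L"
    proof (rule ccontr)
      assume "\<not> 0 < L"
      then have "L = 0" using L0 by simp
      moreover have "0 < (179/100)\<^sup>2 * f" using f0 by simp
      ultimately show False using fu by simp
    qed
    have "4 * R * R * L \<le> 4 * R * (R + c) * L" using R0 c0 L0 by (intro mult_right_mono mult_left_mono) auto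
    with fK have "4 * R * R * L < f * K" by simp
    then have "(179/100)\<^sup>2 * (4 * R * R * L) < (179/100)\<^sup>2 * (f * K)" by simp
    also have "\<dots> \<le> u\<^sup>2 * L * 2 * K" using fu K0 by (simp add: mult.assoc mult_right_mono)
    finally have h: "(179/100)\<^sup>2 * (4 * R * R * L) < u\<^sup>2 * L * 2 * K" .
    have RRL: "0 \<le> R * R * L" using R0 L0 by simp
    have "6 * (R * R * L) \<le> (179/100)\<^sup>2 * 4 * (R * R * L)"
      by (rule mult_right_mono[OF _ RRL]) (simp add: power2_eq_square)
    then have "(6 * R * R) * L < (u\<^sup>2 * 2 * K) * L" using h by (simp add: mult_ac)
    then have h6: "6 * R * R < u\<^sup>2 * 2 * K" using L1 by simp
    have "u\<^sup>2 * K \<le> u\<^sup>2 * (K * K)" using K by (intro mult_left_mono) auto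
    then have "6 * R * R < 2 * (u\<^sup>2 * (K * K))" using h6 by (simp add: mult_ac)
    then have "3 * (R * R) < (K * K) * (u * u)" by (simp add: power2_eq_square mult_ac)
    moreover have "0 \<le> (K * K) * (u * u)" by simp
    ultimately have "R * R < 81/100 * ((K * K) * (u * u))" by linarith
    moreover have "(9/10 * K * u)\<^sup>2 = 81/100 * ((K * K) * (u * u))"
      unfolding power2_eq_square by (simp only: mult_ac)
    ultimately have "R\<^sup>2 < (9/10 * K * u)\<^sup>2" by (simp only: power2_eq_square)
    moreover have "0 \<le> 9/10 * K * u" using u0 K0 by simp
    ultimately have "R < 9/10 * K * u" by (rule power2_less_imp_less)
    then show ?thesis unfolding u_def a_def f_def .
  qed
qed



definition dec :: "real^'n^'m \<Rightarrow> real^'m \<Rightarrow> real^'n \<Rightarrow> real" where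
  "dec A b y = (if lsq_grad A b y = 0 then 0 else polyak_step A b y * lsq A b y)"

lemma lsq_tendsto:
  assumes "g \<longlonglongrightarrow> l"
  shows "(\<lambda>j. lsq A b (g j)) \<longlonglongrightarrow> lsq A b l"
  unfolding lsq_def
  by (intro tendsto_intros bounded_linear.tendsto[OF matrix_vector_mul_bounded_linear] assms)

lemma breg_tendsto:
  assumes l0: "\<forall>i. 0 \<le> l $ i" and gl: "g \<longlonglongrightarrow> l" and gp: "\<forall>j i. 0 < g j $ i"
  shows "(\<lambda>j. entropy_breg l (g j)) \<longlonglongrightarrow> 0"
proof -
  have "(\<lambda>j. bterm (l $ i) (g j $ i)) \<longlonglongrightarrow> 0" for i
  proof (cases "l $ i = 0")
    case True
    have "(\<lambda>j. g j $ i) \<longlonglongrightarrow> l $ i" using gl by (rule tendsto_vec_nth)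
    then show ?thesis using True by (simp add: bterm_def)
  next
    case False
    have gi: "(\<lambda>j. g j $ i) \<longlonglongrightarrow> l $ i" using gl by (rule tendsto_vec_nth)
    have "(\<lambda>j. l $ i * ln (l $ i / g j $ i) - l $ i + g j $ i) \<longlonglongrightarrow> l $ i * ln (l $ i / l $ i) - l $ i + l $ i"
      using False by (intro tendsto_intros gi) auto
    then show ?thesis using False by (simp add: bterm_def)
  qed
  then have "(\<lambda>j. \<Sum>i\<in>UNIV. bterm (l $ i) (g j $ i)) \<longlonglongrightarrow> (\<Sum>i\<in>(UNIV::'a set). 0)"
    by (intro tendsto_sum) auto
  then show ?thesis by (simp add: breg_sum)
qed

context
  fixes A :: "real^'n^'m" and b :: "real^'m" and x :: "nat \<Rightarrow> real^'n"
  assumes x0: "\<forall>i. 0 < x 0 $ i" and rec: "\<forall>k. x (Suc k) = emd_step A b (x k)"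
begin

lemma seq_pos: "\<forall>i. 0 < x k $ i"
proof (induction k)
  case 0 show ?case using x0 .
next
  case (Suc k) show ?case using rec emd_step_pos[OF Suc.IH, of A b] by simp
qed

lemma dec_nonneg: "\<forall>i. 0 < y $ i \<Longrightarrow> 0 \<le> dec A b y"
  using polyak_facts(3)[of y A b] lsq_nonneg[of A b y] by (simp add: dec_def)

lemma seq_step:
  assumes z: "z \<in> feas_nonneg A b"
  shows "entropy_breg z (x (Suc k)) + 9/10 * dec A b (x k) \<le> entropy_breg z (x k)"
proof (cases "lsq_grad A b (x k) = 0")
  case True then show ?thesis using rec by (simp add: dec_def emd_step_def)
next
  case False then show ?thesis using rec step_decrease[OF z seq_pos False] by (simp add: dec_def)
qed

lemma seq_mono:
  assumes z: "z \<in> feas_nonneg A b" and "n \<le> k"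
  shows "entropy_breg z (x k) \<le> entropy_breg z (x n)"
proof (rule lift_Suc_antimono_le[of "\<lambda>k. entropy_breg z (x k)", OF _ assms(2)])
  fix k show "entropy_breg z (x (Suc k)) \<le> entropy_breg z (x k)"
    using seq_step[OF z, of k] dec_nonneg[OF seq_pos[of k]] by linarith
qed

lemma telescope:
  assumes z: "z \<in> feas_nonneg A b"
  shows "entropy_breg z (x (Suc k)) + 9/10 * (\<Sum>i\<le>k. dec A b (x i)) \<le> entropy_breg z (x 0)"
proof (induction k)
  case 0 then show ?case using seq_step[OF z, of 0] by simp
next
  case (Suc k) then show ?case using seq_step[OF z, of "Suc k"] by (simp add: algebra_simps)
qed

lemma rate:
  assumes z: "z \<in> feas_nonneg A b"
  shows "Min ((\<lambda>i. lsq A b (x i)) ` {..k})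
    \<le> 4 * entropy_breg z (x 0) * (entropy_breg z (x 0) + one_norm z) * max_col_sq A / real (k + 1)"
proof (rule ccontr)
  define R where "R = entropy_breg z (x 0)"
  define B where "B = 4 * R * (R + one_norm z) * max_col_sq A / real (k + 1)"
  assume "\<not> ?thesis"
  then have MB: "\<forall>i\<in>{..k}. B < lsq A b (x i)" by (simp add: B_def R_def not_le)
  have z0: "\<forall>i. 0 \<le> z $ i" using z by (simp add: feas_nonneg_def)
  have R0: "0 \<le> R" unfolding R_def using breg_nonneg[OF z0 x0] .
  have B0: "0 \<le> B" unfolding B_def using R0 max_col_sq_nonneg[of A]
    by (intro divide_nonneg_nonneg mult_nonneg_nonneg) (auto simp: one_norm_def sum_nonneg)
  have each: "R < 9/10 * real (k + 1) * dec A b (x i)" if "i \<le> k" for i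
  proof -
    have fB: "B < lsq A b (x i)" using MB that by simp
    have g0: "lsq_grad A b (x i) \<noteq> 0" using grad_zero_imp[OF z] fB B0 by force
    have "R < 9/10 * real (k + 1) * (polyak_step A b (x i) * lsq A b (x i))"
      by (rule rate_step[OF z seq_pos g0]) (use seq_mono[OF z, of 0 i] fB in \<open>auto simp: R_def B_def\<close>)
    then show ?thesis using g0 by (simp add: dec_def)
  qed
  have "(\<Sum>i\<le>k. R) < (\<Sum>i\<le>k. 9/10 * real (k + 1) * dec A b (x i))"
    by (rule sum_strict_mono) (use each in auto)
  have "real (k + 1) * R < real (k + 1) * (9/10 * (\<Sum>i\<le>k. dec A b (x i)))"
  proof -
    have "(\<Sum>i\<le>k. 9/10 * real (k + 1) * dec A b (x i)) = real (k + 1) * (9/10 * (\<Sum>i\<le>k. dec A b (x i)))"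
      by (simp only: sum_distrib_left[symmetric] sum_distrib_right[symmetric] mult_ac)
    moreover have "(\<Sum>i\<le>k. R) = real (k + 1) * R" by simp
    ultimately show ?thesis using \<open>(\<Sum>i\<le>k. R) < _\<close> by linarith
  qed
  then have "R < 9/10 * (\<Sum>i\<le>k. dec A b (x i))" by (rule mult_left_less_imp_less) simp
  moreover have "0 \<le> entropy_breg z (x (Suc k))" using breg_nonneg[OF z0 seq_pos] .
  ultimately show False using telescope[OF z, of k] by (simp add: R_def)
qed

end



theorem theorem3p4:
  fixes A :: "real^'n^'m" and b :: "real^'m" and x :: "nat \<Rightarrow> real^'n"
  assumes "feas_nonneg A b \<noteq> {}"
    and "\<forall>i. x 0 $ i > 0"
    and "\<forall>k. x (Suc k) = emd_step A b (x k)"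
  shows "\<exists>xs \<in> feas_nonneg A b. x \<longlonglongrightarrow> xs \<and>
           (\<forall>k. Min ((\<lambda>i. lsq A b (x i)) ` {..k})
                \<le> 4 * entropy_breg xs (x 0) * (entropy_breg xs (x 0) + one_norm xs)
                    * max_col_sq A / real (k + 1))"
proof -
  note x0 = assms(2) and rec = assms(3)
  note pos = seq_pos[OF x0 rec]
  obtain z where z: "z \<in> feas_nonneg A b" using assms(1) by blast
  have z0: "\<forall>i. 0 \<le> z $ i" using z by (simp add: feas_nonneg_def)
  define R where "R = entropy_breg z (x 0)"
  define C where "C = 4 * R * (R + one_norm z) * max_col_sq A"
  have bnd: "norm (x k) \<le> 5/3 * (R + one_norm z)" for k
  proof -
    have "3/5 * one_norm (x k) - one_norm z \<le> entropy_breg z (x k)" by (rule one_norm_bound[OF z0 pos])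
    also have "\<dots> \<le> R" unfolding R_def by (rule seq_mono[OF x0 rec z]) simp
    finally have "one_norm (x k) \<le> 5/3 * (R + one_norm z)" by simp
    moreover have "norm (x k) \<le> one_norm (x k)" unfolding one_norm_def by (rule norm_le_l1_cart)
    ultimately show ?thesis by simp
  qed
  have "\<forall>j. \<exists>i. i \<le> j \<and> lsq A b (x i) \<le> C / real (Suc j)"
  proof
    fix j
    have "Min ((\<lambda>i. lsq A b (x i)) ` {..j}) \<in> (\<lambda>i. lsq A b (x i)) ` {..j}" by (rule Min_in) auto
    then obtain i where "i \<le> j" "lsq A b (x i) = Min ((\<lambda>i. lsq A b (x i)) ` {..j})" by (metis (no_types, lifting) atMost_iff imageE)
    then show "\<exists>i. i \<le> j \<and> lsq A b (x i) \<le> C / real (Suc j)"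
      using rate[OF x0 rec z, of j] by (auto simp: C_def R_def)
  qed
  then obtain idx where idx: "\<And>j. lsq A b (x (idx j)) \<le> C / real (Suc j)" by metis
  define y where "y = x \<circ> idx"
  have "bounded (range y)" unfolding bounded_iff y_def using bnd by (intro exI[of _ "5/3 * (R + one_norm z)"]) auto
  then obtain l r where r: "strict_mono r" and ylim: "(y \<circ> r) \<longlonglongrightarrow> l"
    using bounded_imp_convergent_subsequence by blast
  have Clim: "(\<lambda>j. C / real (Suc j)) \<longlonglongrightarrow> 0"
    using LIMSEQ_Suc[OF lim_const_over_n[of C]] by simp
  have f0: "(\<lambda>j. lsq A b ((y \<circ> r) j)) \<longlonglongrightarrow> 0"
  proof (rule tendsto_sandwich[of "\<lambda>_. 0" _ _ "(\<lambda>j. C / real (Suc j)) \<circ> r"])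
    show "\<forall>\<^sub>F n in sequentially. 0 \<le> lsq A b ((y \<circ> r) n)" by (simp add: lsq_nonneg)
    show "\<forall>\<^sub>F n in sequentially. lsq A b ((y \<circ> r) n) \<le> ((\<lambda>j. C / real (Suc j)) \<circ> r) n"
      using idx by (simp add: y_def)
    show "((\<lambda>j. C / real (Suc j)) \<circ> r) \<longlonglongrightarrow> 0" by (rule LIMSEQ_subseq_LIMSEQ[OF Clim r])
  qed simp
  have "(\<lambda>j. lsq A b ((y \<circ> r) j)) \<longlonglongrightarrow> lsq A b l" by (rule lsq_tendsto[OF ylim])
  then have "lsq A b l = 0" using f0 LIMSEQ_unique by blast
  then have Al: "A *v l = b" by (simp add: lsq_def)
  have l0: "\<forall>i. 0 \<le> l $ i"
  proof
    fix i
    have "(\<lambda>j. (y \<circ> r) j $ i) \<longlonglongrightarrow> l $ i" using ylim by (rule tendsto_vec_nth)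
    then show "0 \<le> l $ i" by (rule LIMSEQ_le_const) (use pos in \<open>auto simp: y_def less_imp_le\<close>)
  qed
  have lS: "l \<in> feas_nonneg A b" using Al l0 by (simp add: feas_nonneg_def)
  have Dy: "(\<lambda>j. entropy_breg l ((y \<circ> r) j)) \<longlonglongrightarrow> 0"
    by (rule breg_tendsto[OF l0 ylim]) (use pos in \<open>simp add: y_def\<close>)
  have Dx: "(\<lambda>k. entropy_breg l (x k)) \<longlonglongrightarrow> 0"
  proof (rule LIMSEQ_I)
    fix e :: real assume e: "0 < e"
    obtain J where J: "\<forall>n\<ge>J. norm (entropy_breg l ((y \<circ> r) n) - 0) < e" using LIMSEQ_D[OF Dy e] by blast
    define N where "N = idx (r J)"
    have DN: "entropy_breg l (x N) < e" using J by (auto simp: N_def y_def)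
    show "\<exists>no. \<forall>n\<ge>no. norm (entropy_breg l (x n) - 0) < e"
    proof (intro exI allI impI)
      fix n assume "N \<le> n"
      then have "entropy_breg l (x n) \<le> entropy_breg l (x N)" by (rule seq_mono[OF x0 rec lS])
      moreover have "0 \<le> entropy_breg l (x n)" by (rule breg_nonneg[OF l0 pos])
      ultimately show "norm (entropy_breg l (x n) - 0) < e" using DN by simp
    qed
  qed
  have xl: "x \<longlonglongrightarrow> l"
  proof (rule vec_tendstoI)
    fix i
    have sq: "(\<lambda>k. (sqrt (x k $ i) - sqrt (l $ i))\<^sup>2) \<longlonglongrightarrow> 0"
    proof (rule tendsto_sandwich[of "\<lambda>_. 0" _ _ "\<lambda>k. entropy_breg l (x k)"])
      show "\<forall>\<^sub>F n in sequentially. 0 \<le> (sqrt (x n $ i) - sqrt (l $ i))\<^sup>2" by simp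
      show "\<forall>\<^sub>F n in sequentially. (sqrt (x n $ i) - sqrt (l $ i))\<^sup>2 \<le> entropy_breg l (x n)"
        using comp_sqrt_bound[OF l0 pos] by simp
    qed (use Dx in simp_all)
    have "(\<lambda>k. sqrt ((sqrt (x k $ i) - sqrt (l $ i))\<^sup>2)) \<longlonglongrightarrow> sqrt 0"
      by (rule tendsto_real_sqrt[OF sq])
    then have "(\<lambda>k. \<bar>sqrt (x k $ i) - sqrt (l $ i)\<bar>) \<longlonglongrightarrow> 0" by simp
    then have "(\<lambda>k. sqrt (x k $ i) - sqrt (l $ i)) \<longlonglongrightarrow> 0" by (simp add: tendsto_rabs_zero_iff)
    then have "(\<lambda>k. sqrt (x k $ i)) \<longlonglongrightarrow> sqrt (l $ i)" by (simp add: LIM_zero_iff)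
    then have "(\<lambda>k. (sqrt (x k $ i))\<^sup>2) \<longlonglongrightarrow> (sqrt (l $ i))\<^sup>2" by (rule tendsto_power)
    then show "(\<lambda>k. x k $ i) \<longlonglongrightarrow> l $ i" using pos l0 by (simp add: less_imp_le)
  qed
  show ?thesis using lS xl rate[OF x0 rec lS] by blast
qed


end
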